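(* Let $\mathcal{C}_n$ be the set of real symmetric positive-semidefinite $n\times n$ matrices $\mathbf{C}$ with spectral radius $\rho(\mathbf{C})\le1$, and let $\mathbf{y}_0,\mathbf{y}_1\in\mathbb{R}^n$. Then $$\{\mathbf{C}\mathbf{y}_0+(\mathbf{I}_n-\mathbf{C})\mathbf{y}_1:\mathbf{C}\in\mathcal{C}_n\}=\Big\{\mathbf{y}\in\mathbb{R}^n:\Big\|\mathbf{y}-\tfrac{\mathbf{y}_0+\mathbf{y}_1}{2}\Big\|_2\le\tfrac12\|\mathbf{y}_1-\mathbf{y}_0\|_2\Big\},$$ i.e. the closed Euclidean ball centered at $(\mathbf{y}_0+\mathbf{y}_1)/2$ with radius $\frac12\|\mathbf{y}_1-\mathbf{y}_0\|_2$.
   Context: $\|\cdot\|_2$ is the Euclidean norm; $\mathbf{I}_n$ is the $n\times n$ identity matrix; $\rho(\mathbf{C})$ is the spectral radius (largest absolute value of an eigenvalue). *)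

theory Defs
  imports "HOL-Analysis.Analysis"
begin

definition complex_eigenvalues :: "real^'n^'n \<Rightarrow> complex set" where
  "complex_eigenvalues A =
     {z. \<exists>v::complex^'n. v \<noteq> 0 \<and>
          (\<chi> i j. complex_of_real (A $ i $ j)) *v v = (\<chi> i. z * v $ i)}"

definition spectral_radius :: "real^'n^'n \<Rightarrow> real" where
  "spectral_radius A = Sup (cmod ` complex_eigenvalues A)"

definition psd :: "real^'n^'n \<Rightarrow> bool" where
  "psd A \<longleftrightarrow> (\<forall>x. 0 \<le> x \<bullet> (A *v x))"

definition C_set :: "(real^'n^'n) set" where
  "C_set = {C. transpose C = C \<and> psd C \<and> spectral_radius C \<le> 1}"

end

theory Submission
  imports Defs
begin


lemma sym_inner:
  fixes A :: "real^'n^'n"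
  assumes "transpose A = A"
  shows "x \<bullet> (A *v y) = (A *v x) \<bullet> y"
  by (metis assms dot_lmul_matrix transpose_matrix_vector)

lemma psd_cs:
  fixes M :: "real^'n^'n"
  assumes sym: "transpose M = M" and psd: "\<And>x. 0 \<le> x \<bullet> (M *v x)"
  shows "(y \<bullet> (M *v x))^2 \<le> (x \<bullet> (M *v x)) * (y \<bullet> (M *v y))"
proof -
  define a where "a = x \<bullet> (M *v x)"
  define b where "b = y \<bullet> (M *v x)"
  define c where "c = y \<bullet> (M *v y)"
  have q: "0 \<le> a + 2*t*b + t^2 * c" for t
  proof -
    have "0 \<le> (x + t *\<^sub>R y) \<bullet> (M *v (x + t *\<^sub>R y))" by (rule psd)
    also have "\<dots> = a + t * (y \<bullet> (M *v x)) + t * (x \<bullet> (M *v y)) + t^2 * c"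
      unfolding a_def c_def
      by (simp add: matrix_vector_right_distrib matrix_vector_mult_scaleR inner_add_left inner_add_right algebra_simps power2_eq_square)
    also have "x \<bullet> (M *v y) = y \<bullet> (M *v x)"
      using sym_inner[OF sym, of x y] by (simp add: inner_commute)
    finally show ?thesis unfolding b_def by simp
  qed
  have "b^2 \<le> a * c"
  proof (cases "c = 0")
    case True
    then have "0 \<le> a + 2*t*b" for t using q[of t] by simp
    have "b = 0"
    proof (rule ccontr)
      assume "b \<noteq> 0"
      have "0 \<le> a + 2*(-(a+1)/(2*b))*b" by fact
      also have "\<dots> = -1" using \<open>b \<noteq> 0\<close> by (simp add: field_simps)
      finally show False by simp
    qed
    then show ?thesis using True by simp
  next
    case False
    have c0: "c > 0" using False psd[of y] unfolding c_def by simp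
    have "0 \<le> a + 2*(-b/c)*b + (-b/c)^2 * c" by (rule q)
    also have "\<dots> = a - b^2/c" using c0 by (simp add: field_simps power2_eq_square)
    finally show ?thesis using c0 by (simp add: field_simps mult.commute)
  qed
  then show ?thesis unfolding a_def b_def c_def by simp
qed

lemma psd_zero:
  fixes M :: "real^'n^'n"
  assumes sym: "transpose M = M" and psd: "\<And>x. 0 \<le> x \<bullet> (M *v x)"
    and "x \<bullet> (M *v x) = 0"
  shows "M *v x = 0"
proof -
  have "((M *v x) \<bullet> (M *v x))^2 \<le> 0"
    using psd_cs[OF sym psd, of "M *v x" x] assms(3) by simp
  then show ?thesis by simp
qed



lemma mat_mv: "mat l *v (x::real^'n) = l *\<^sub>R x"
proof -
  have "mat l = l *\<^sub>R (mat 1 :: real^'n^'n)" by (simp add: vec_eq_iff mat_def)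
  then show ?thesis by (metis scaleR_matrix_vector_assoc matrix_vector_mul_lid)
qed

lemma cont_quad:
  fixes A :: "real^'n^'n"
  shows "continuous_on S (\<lambda>x::real^'n. x \<bullet> (A *v x))"
proof -
  have "bounded_linear ((*v) A)"
    using matrix_vector_mul_linear linear_conv_bounded_linear by blast
  then have "continuous_on S ((*v) A)" by (rule linear_continuous_on)
  then show ?thesis by (intro continuous_on_inner continuous_on_id)
qed

lemma sym_diff: fixes A :: "real^'n^'n" assumes sym: "transpose A = A" shows "transpose (mat l - A) = mat l - A"
proof -
  have "A $ j $ i = A $ i $ j" for i j using arg_cong[OF sym, of "\<lambda>B. B $ i $ j"] by (simp add: transpose_def)
  then show ?thesis by (simp add: vec_eq_iff transpose_def mat_def)
qed

lemma rayleigh_max: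
  fixes A :: "real^'n^'n"
  assumes sym: "transpose A = A"
  shows "\<exists>x0. norm x0 = 1 \<and> A *v x0 = (x0 \<bullet> (A *v x0)) *\<^sub>R x0 \<and>
            (\<forall>x. x \<bullet> (A *v x) \<le> (x0 \<bullet> (A *v x0)) * (norm x)^2)"
proof -
  let ?f = "\<lambda>x::real^'n. x \<bullet> (A *v x)"
  have cont: "continuous_on (sphere 0 1) ?f" by (rule cont_quad)
  have ne: "sphere (0::real^'n) 1 \<noteq> {}"
  proof -
    have "axis undefined (1::real) \<in> sphere (0::real^'n) 1" by (simp add: norm_axis_1)
    then show ?thesis by blast
  qed
  obtain x0 where x0: "x0 \<in> sphere 0 1" and mx: "\<And>y. y \<in> sphere 0 1 \<Longrightarrow> ?f y \<le> ?f x0"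
    using continuous_attains_sup[OF compact_sphere ne cont] by blast
  define l where "l = ?f x0"
  have bnd: "?f x \<le> l * (norm x)^2" for x
  proof (cases "x = 0")
    case True then show ?thesis by simp
  next
    case False
    then have nx: "norm x > 0" by simp
    have "?f ((1/norm x) *\<^sub>R x) \<le> l" unfolding l_def using mx[of "(1/norm x) *\<^sub>R x"] nx by simp
    moreover have "?f ((1/norm x) *\<^sub>R x) = ?f x / (norm x)^2"
      by (simp add: matrix_vector_mult_scaleR power2_eq_square)
    ultimately show ?thesis using nx by (simp add: field_simps)
  qed
  define M where "M = mat l - A"
  have Msym: "transpose M = M" unfolding M_def using sym by (rule sym_diff)
  have Mx: "x \<bullet> (M *v x) = l * (norm x)^2 - ?f x" for x
    unfolding M_def by (simp add: matrix_vector_mult_diff_rdistrib inner_diff_right mat_mv power2_norm_eq_inner)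
  have Mpsd: "0 \<le> x \<bullet> (M *v x)" for x using bnd[of x] Mx[of x] by simp
  have "x0 \<bullet> (M *v x0) = 0" using Mx[of x0] x0 unfolding l_def by simp
  then have "M *v x0 = 0" by (rule psd_zero[OF Msym Mpsd])
  then have "A *v x0 = l *\<^sub>R x0" unfolding M_def
    by (simp add: matrix_vector_mult_diff_rdistrib mat_mv)
  then show ?thesis using x0 bnd unfolding l_def by auto
qed



lemma complex_eig_real:
  fixes A :: "real^'n^'n" and v :: "complex^'n"
  assumes sym: "transpose A = A" and v0: "v \<noteq> 0"
    and ev: "(\<chi> i j. complex_of_real (A $ i $ j)) *v v = (\<chi> i. z * v $ i)"
  shows "Im z = 0 \<and> (\<exists>w. w \<noteq> 0 \<and> A *v w = Re z *\<^sub>R w)"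
proof -
  define a where "a = (\<chi> i. Re (v $ i))"
  define b where "b = (\<chi> i. Im (v $ i))"
  define p where "p = Re z"
  define q where "q = Im z"
  have comp: "(\<Sum>j\<in>UNIV. complex_of_real (A $ i $ j) * v $ j) = z * v $ i" for i
    using arg_cong[OF ev, of "\<lambda>u. u $ i"] by (simp add: matrix_vector_mult_def)
  have Aa: "A *v a = p *\<^sub>R a - q *\<^sub>R b"
  proof -
    have "(A *v a) $ i = (p *\<^sub>R a - q *\<^sub>R b) $ i" for i
      using arg_cong[OF comp[of i], of Re]
      by (simp add: matrix_vector_mult_def a_def b_def p_def q_def Re_sum)
    then show ?thesis by (simp add: vec_eq_iff)
  qed
  have Ab: "A *v b = q *\<^sub>R a + p *\<^sub>R b"
  proof -
    have "(A *v b) $ i = (q *\<^sub>R a + p *\<^sub>R b) $ i" for i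
      using arg_cong[OF comp[of i], of Im]
      by (simp add: matrix_vector_mult_def a_def b_def p_def q_def Im_sum algebra_simps)
    then show ?thesis by (simp add: vec_eq_iff)
  qed
  have "a \<bullet> (A *v b) = (A *v a) \<bullet> b" by (rule sym_inner[OF sym])
  then have "q * (a \<bullet> a) + p * (a \<bullet> b) = p * (a \<bullet> b) - q * (b \<bullet> b)"
    unfolding Aa Ab by (simp add: inner_add_right inner_diff_left inner_diff_right inner_commute)
  then have q0: "q * (a \<bullet> a + b \<bullet> b) = 0" by (simp add: algebra_simps)
  have ab: "a \<noteq> 0 \<or> b \<noteq> 0"
  proof (rule ccontr)
    assume "\<not> ?thesis"
    then have "\<forall>i. Re (v $ i) = 0 \<and> Im (v $ i) = 0" unfolding a_def b_def by (simp add: vec_eq_iff)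
    then have "v = 0" by (simp add: vec_eq_iff complex_eq_iff)
    with v0 show False by simp
  qed
  then have "a \<bullet> a + b \<bullet> b > 0"
    by (metis add_nonneg_pos add_pos_nonneg inner_gt_zero_iff inner_ge_zero)
  with q0 have qz: "q = 0" by simp
  have "\<exists>w. w \<noteq> 0 \<and> A *v w = p *\<^sub>R w"
    using ab Aa Ab qz by auto
  then show ?thesis using qz unfolding p_def q_def by simp
qed



lemma real_eig_complex:
  fixes A :: "real^'n^'n"
  assumes "w \<noteq> 0" "A *v w = l *\<^sub>R w"
  shows "complex_of_real l \<in> complex_eigenvalues A"
proof -
  define v where "v = (\<chi> i. complex_of_real (w $ i))"
  have "v \<noteq> 0" using assms(1) unfolding v_def by (simp add: vec_eq_iff)
  moreover have "(\<chi> i j. complex_of_real (A $ i $ j)) *v v = (\<chi> i. complex_of_real l * v $ i)"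
  proof -
    have "(\<Sum>j\<in>UNIV. complex_of_real (A $ i $ j) * complex_of_real (w $ j)) = complex_of_real l * complex_of_real (w $ i)" for i
    proof -
      have "(\<Sum>j\<in>UNIV. A $ i $ j * w $ j) = l * w $ i"
        using arg_cong[OF assms(2), of "\<lambda>u. u $ i"] by (simp add: matrix_vector_mult_def)
      then have "complex_of_real (\<Sum>j\<in>UNIV. A $ i $ j * w $ j) = complex_of_real (l * w $ i)" by simp
      then show ?thesis by (simp only: of_real_sum of_real_mult)
    qed
    then show ?thesis by (simp add: vec_eq_iff matrix_vector_mult_def v_def)
  qed
  ultimately show ?thesis unfolding complex_eigenvalues_def by (intro CollectI exI[of _ v] conjI)
qed

lemma eig_ne:
  fixes A :: "real^'n^'n"
  assumes sym: "transpose A = A"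
  shows "complex_eigenvalues A \<noteq> {}"
proof -
  obtain x0 where a: "norm x0 = 1" and b: "A *v x0 = (x0 \<bullet> (A *v x0)) *\<^sub>R x0"
    using rayleigh_max[OF sym] by blast
  from a have "x0 \<noteq> 0" by auto
  from real_eig_complex[OF this b] show ?thesis by blast
qed

lemma rho_le1:
  fixes A :: "real^'n^'n"
  assumes sym: "transpose A = A" and ps: "\<And>x. 0 \<le> x \<bullet> (A *v x)"
    and up: "\<And>x. x \<bullet> (A *v x) \<le> (norm x)^2"
  shows "spectral_radius A \<le> 1"
  unfolding spectral_radius_def
proof (rule cSup_least)
  show "cmod ` complex_eigenvalues A \<noteq> {}" using eig_ne[OF sym] by simp
next
  fix r assume "r \<in> cmod ` complex_eigenvalues A"
  then obtain z where z1: "r = cmod z" and "z \<in> complex_eigenvalues A" by blast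
  then obtain v where z2: "v \<noteq> 0"
     "(\<chi> i j. complex_of_real (A $ i $ j)) *v v = (\<chi> i. z * v $ i)"
    unfolding complex_eigenvalues_def by blast
  note z = z1 z2
  from complex_eig_real[OF sym z(2,3)] obtain w where
    w: "Im z = 0" "w \<noteq> 0" "A *v w = Re z *\<^sub>R w" by blast
  have e: "w \<bullet> (A *v w) = Re z * (norm w)^2" using w(3) by (simp add: power2_norm_eq_inner)
  have nw: "(norm w)^2 > 0" using w(2) by simp
  have "0 \<le> Re z" using ps[of w] e nw by (simp add: zero_le_mult_iff)
  moreover have "Re z \<le> 1" using up[of w] e nw by simp
  moreover have "cmod z = \<bar>Re z\<bar>" using w(1) by (simp add: cmod_def)
  ultimately show "r \<le> 1" using z(1) by simp
qed

lemma rho_bound: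
  fixes A :: "real^'n^'n"
  assumes sym: "transpose A = A" and ps: "\<And>x. 0 \<le> x \<bullet> (A *v x)"
    and rho: "spectral_radius A \<le> 1"
  shows "x \<bullet> (A *v x) \<le> (norm x)^2"
proof -
  obtain x0 where x0: "norm x0 = 1" "A *v x0 = (x0 \<bullet> (A *v x0)) *\<^sub>R x0"
     and mx: "\<And>x. x \<bullet> (A *v x) \<le> (x0 \<bullet> (A *v x0)) * (norm x)^2"
    using rayleigh_max[OF sym] by blast
  define l where "l = x0 \<bullet> (A *v x0)"
  have l0: "0 \<le> l" unfolding l_def by (rule ps)
  have "x0 \<noteq> 0" using x0 by auto
  then have lin: "complex_of_real l \<in> complex_eigenvalues A"
    using real_eig_complex x0(2) unfolding l_def by blast
  have bdd: "bdd_above (cmod ` complex_eigenvalues A)"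
  proof (rule bdd_aboveI2)
    fix z assume "z \<in> complex_eigenvalues A"
    then obtain v where z: "v \<noteq> 0"
     "(\<chi> i j. complex_of_real (A $ i $ j)) *v v = (\<chi> i. z * v $ i)"
      unfolding complex_eigenvalues_def by blast
    from complex_eig_real[OF sym z] obtain w where
      w: "Im z = 0" "w \<noteq> 0" "A *v w = Re z *\<^sub>R w" by blast
    have e: "w \<bullet> (A *v w) = Re z * (norm w)^2" using w(3) by (simp add: power2_norm_eq_inner)
    have nw: "(norm w)^2 > 0" using w(2) by simp
    have "0 \<le> Re z" using ps[of w] e nw by (simp add: zero_le_mult_iff)
    moreover have "Re z \<le> l" using mx[of w] e nw unfolding l_def by simp
    moreover have "cmod z = \<bar>Re z\<bar>" using w(1) by (simp add: cmod_def)
    ultimately show "cmod z \<le> l" by simp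
  qed
  have "cmod (complex_of_real l) \<le> Sup (cmod ` complex_eigenvalues A)"
    using cSup_upper[OF imageI[OF lin] bdd] .
  then have "l \<le> 1" using rho l0 unfolding spectral_radius_def by simp
  then have "l * (norm x)^2 \<le> (norm x)^2" using mult_right_mono[of l 1 "(norm x)^2"] by simp
  then show ?thesis using mx[of x] unfolding l_def by simp
qed



lemma decomp: "C *v y0 + (mat 1 - C) *v y1 = y1 + C *v (y0 - y1)"
  for C :: "real^'n^'n"
  by (simp add: matrix_vector_mult_diff_rdistrib matrix_vector_mult_diff_distrib algebra_simps)

lemma key_ineq:
  fixes C :: "real^'n^'n"
  assumes "C \<in> C_set"
  shows "(C *v d) \<bullet> (C *v d) \<le> d \<bullet> (C *v d)"
proof -
  have sym: "transpose C = C" and ps: "\<And>x. 0 \<le> x \<bullet> (C *v x)" and r: "spectral_radius C \<le> 1"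
    using assms unfolding C_set_def psd_def by auto
  define u where "u = (C *v d) \<bullet> (C *v d)"
  have "((C *v d) \<bullet> (C *v d))^2 \<le> (d \<bullet> (C *v d)) * ((C *v d) \<bullet> (C *v (C *v d)))"
    by (rule psd_cs[OF sym ps])
  also have "\<dots> \<le> (d \<bullet> (C *v d)) * u"
    using rho_bound[OF sym ps r, of "C *v d"] ps[of d] unfolding u_def
    by (intro mult_left_mono) (auto simp: power2_norm_eq_inner)
  finally have "u^2 \<le> (d \<bullet> (C *v d)) * u" unfolding u_def .
  moreover have "u \<ge> 0" unfolding u_def by simp
  ultimately show ?thesis unfolding u_def[symmetric] using ps[of d]
    by (cases "u = 0") (auto simp: power2_eq_square)
qed

theorem lemma5:
  fixes y0 y1 :: "real^'n"
  shows "{C *v y0 + (mat 1 - C) *v y1 | C. C \<in> C_set} =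
         cball ((1/2) *\<^sub>R (y0 + y1)) ((1/2) * norm (y1 - y0))"
proof (intro set_eqI iffI)
  fix y assume "y \<in> {C *v y0 + (mat 1 - C) *v y1 | C. C \<in> C_set}"
  then obtain C where C: "C \<in> C_set" and y: "y = y1 + C *v (y0 - y1)"
    using decomp by blast
  define d where "d = y0 - y1"
  have k: "(C *v d) \<bullet> (C *v d) \<le> d \<bullet> (C *v d)" by (rule key_ineq[OF C])
  have e: "(1/2) *\<^sub>R (y0 + y1) - y = (1/2) *\<^sub>R d - C *v d"
    unfolding y d_def by (simp add: vec_eq_iff algebra_simps)
  have "(norm ((1/2) *\<^sub>R d - C *v d))^2 = (1/4) * (d \<bullet> d) - d \<bullet> (C *v d) + (C *v d) \<bullet> (C *v d)"
    by (simp add: power2_norm_eq_inner inner_diff_left inner_diff_right inner_commute algebra_simps)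
  also have "\<dots> \<le> (1/4) * (d \<bullet> d)" using k by simp
  also have "\<dots> = ((1/2) * norm d)^2" by (simp add: power_divide flip: power2_norm_eq_inner)
  finally have "norm ((1/2) *\<^sub>R d - C *v d) \<le> (1/2) * norm d"
    by (rule power2_le_imp_le) simp
  moreover have "norm d = norm (y1 - y0)" unfolding d_def by (simp add: norm_minus_commute)
  ultimately show "y \<in> cball ((1/2) *\<^sub>R (y0 + y1)) ((1/2) * norm (y1 - y0))"
    by (simp add: dist_norm e)
next
  fix y assume "y \<in> cball ((1/2) *\<^sub>R (y0 + y1)) ((1/2) * norm (y1 - y0))"
  then have yb: "norm ((1/2) *\<^sub>R (y0 + y1) - y) \<le> (1/2) * norm (y1 - y0)" by (simp add: dist_norm)
  define d where "d = y0 - y1"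
  define z where "z = y - y1"
  have e: "(1/2) *\<^sub>R (y0 + y1) - y = (1/2) *\<^sub>R d - z" unfolding z_def d_def by (simp add: vec_eq_iff algebra_simps)
  have "norm ((1/2) *\<^sub>R d - z) \<le> (1/2) * norm d"
    using yb unfolding e d_def by (simp add: norm_minus_commute)
  then have "(norm ((1/2) *\<^sub>R d - z))^2 \<le> ((1/2) * norm d)^2"
    by (rule power_mono) simp
  moreover have "(norm d / 2)^2 = d \<bullet> d / 4" by (simp add: power_divide flip: power2_norm_eq_inner)
  ultimately have zd: "z \<bullet> z \<le> z \<bullet> d"
    by (simp add: power2_norm_eq_inner inner_diff_left inner_diff_right inner_commute algebra_simps power_mult_distrib)
  show "y \<in> {C *v y0 + (mat 1 - C) *v y1 | C. C \<in> C_set}"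
  proof (cases "z = 0")
    case True
    have "mat 0 \<in> (C_set :: (real^'n^'n) set)"
      unfolding C_set_def psd_def
      by (auto simp: transpose_mat mat_mv vec_eq_iff transpose_def intro!: rho_le1)
    moreover have "y = mat 0 *v y0 + (mat 1 - mat 0) *v y1"
      using True unfolding z_def by (simp add: mat_mv)
    ultimately show ?thesis by blast
  next
    case False
    define s where "s = z \<bullet> d"
    have s0: "s > 0" using zd False unfolding s_def by (metis inner_gt_zero_iff order_less_le_trans)
    define C :: "real^'n^'n" where "C = (\<chi> i j. z $ i * z $ j / s)"
    have Cx: "C *v x = ((z \<bullet> x) / s) *\<^sub>R z" for x
    proof -
      have "(C *v x) $ i = (((z \<bullet> x) / s) *\<^sub>R z) $ i" for i
        by (simp add: C_def matrix_vector_mult_def inner_vec_def sum_divide_distrib sum_distrib_left algebra_simps)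
      then show ?thesis by (simp add: vec_eq_iff)
    qed
    have Csym: "transpose C = C" unfolding C_def by (simp add: vec_eq_iff transpose_def mult.commute)
    have Cq: "x \<bullet> (C *v x) = (z \<bullet> x)^2 / s" for x
      by (simp add: Cx inner_commute power2_eq_square)
    have Cps: "0 \<le> x \<bullet> (C *v x)" for x using s0 by (simp add: Cq)
    have Cup: "x \<bullet> (C *v x) \<le> (norm x)^2" for x
    proof -
      have "(z \<bullet> x)^2 \<le> (norm z * norm x)^2"
        using Cauchy_Schwarz_ineq2[of z x] by (metis abs_ge_zero power_mono power2_abs)
      also have "\<dots> = (z \<bullet> z) * (norm x)^2" by (simp add: power_mult_distrib power2_norm_eq_inner)
      also have "\<dots> \<le> s * (norm x)^2" using zd unfolding s_def by (simp add: mult_right_mono)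
      finally show ?thesis using s0 by (simp add: Cq divide_le_eq mult.commute)
    qed
    have "C \<in> C_set" unfolding C_set_def psd_def
      using Csym Cps rho_le1[OF Csym Cps Cup] by auto
    moreover have "y = C *v y0 + (mat 1 - C) *v y1"
    proof -
      have "C *v d = z" using s0 by (simp add: Cx s_def)
      then show ?thesis unfolding decomp d_def[symmetric] z_def by simp
    qed
    ultimately show ?thesis by blast
  qed
qed

end
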